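(* Consider components $m\in[M]$ sharing a common finite action set $\mathcal X_A$ (i.e. $\mathcal X_A^m=\mathcal X_A$ for all $m$) and horizon $T$. The linear relaxation of MILP (IPd) is equivalent to the fluid formulation (F): there exists a feasible solution of one with a given objective value if and only if there exists a feasible solution of the other with the same objective value. In particular $z_{\mathrm F}=z_{\mathrm R}$, where $z_{\mathrm R}$ is the value of the linear relaxation of (IPd).
   Context: Each component $m$ is a POMDP $(\mathcal X_S^m,\mathcal X_O^m,\mathcal X_A,\mathfrak p^m,\mathbf r^m)$ with initial distribution $p^m(s)$, emissions $p^m(o|s)$, transitions $p^m(s'|s,a)$, reward $r^m(s,a,s')$. For a POMDP, $\mathcal Q^{\mathrm d}(T,\mathcal X_S,\mathcal X_O,\mathcal X_A,\mathfrak p)$ is the set of $(\tau,\delta)$ with $\delta^t_{a|o}\in\{0,1\}$, $\sum_a\delta^t_{a|o}=1$, nonnegative $\tau=((\tau^1_s),(\tau^t_{soa}),(\tau^t_{sas'}))$ with (i) $\tau^1_s=p(s)$; (ii) $\sum_{o,a}\tau^t_{soa}=\nu^t_s$, $\nu^1_s=\tau^1_s$, $\nu^t_s=\sum_{s'',a''}\tau^{t-1}_{s''a''s}$ ($t\ge2$); (iii) $\sum_{\bar s}\tau^t_{sa\bar s}=\sum_o\tau^t_{soa}$; (iv) $\tau^t_{sas'}=p(s'|s,a)\sum_{\bar s}\tau^t_{sa\bar s}$; (McCormick) $\tau^t_{soa}\le p(o|s)\nu^t_s$, $\tau^t_{soa}\le\delta^t_{a|o}$, $\tau^t_{soa}\ge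 p(o|s)\nu^t_s+\delta^t_{a|o}-1$. Its linear relaxation allows $\delta^t_{a|o}\in[0,1]$. MILP (IPd): maximize $\sum_t\sum_m\sum_{s,s'\in\mathcal X_S^m,a\in\mathcal X_A}r^m(s,a,s')\tau^{t,m}_{sas'}$ s.t. $(\tau^m,\delta^m)\in\mathcal Q^{\mathrm d}(T,\mathcal X_S^m,\mathcal X_O^m,\mathcal X_A,\mathfrak p^m)$ for all $m$, $\tau^{t,m}_a=\sum_{s,o}\tau^{t,m}_{soa}$, and $\tau^{t,m}_a=\tau^{t,m+1}_a$ for all $a\in\mathcal X_A$, $m\in[M-1]$, $t\in[T]$. Fluid formulation (F): maximize $\sum_t\sum_m\sum_{s,s',a}r^m(s,a,s')x^{t,m}_{sas'}$ over nonnegative $x^{1,m}_s$, $x^{t,m}_{sas'}$, $A^t_a$ s.t. $x^{1,m}_s=\sum_{a',s'}x^{1,m}_{sa's'}$; $\sum_{s',a'}x^{t,m}_{s'a's}=\sum_{a',s'}x^{t+1,m}_{sa's'}$ for $t\in[T-1]$; $x^{1,m}_s=p^m(s)$; $x^{t,m}_{sas'}=p^m(s'|s,a)\sum_{s''}x^{t,m}_{sas''}$; $\sum_{s,s'}x^{t,m}_{sas'}=A^t_a$ for all $a,m,t$. Its value is $z_{\mathrm F}$. *)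

theory Defs
  imports Main "HOL-Library.Extended_Real"
begin

text \<open>A single POMDP with finite state set S, observation set Ob, action set A,
 initial distribution p0 s, emission pe s ob = p(ob|s), transition pt s a s' = p(s'|s,a).  Variables: tau1 s, tauO t s ob a, tauT t s a s', delta t a ob
 (= delta^t_{a|ob}).\<close>

definition nu_of :: "'s set \<Rightarrow> 'a set \<Rightarrow> ('s \<Rightarrow> real) \<Rightarrow> (nat \<Rightarrow> 's \<Rightarrow> 'a \<Rightarrow> 's \<Rightarrow> real)
    \<Rightarrow> nat \<Rightarrow> 's \<Rightarrow> real" where
  "nu_of S A tau1 tauT t s =
     (if t = 1 then tau1 s else (\<Sum>s''\<in>S. \<Sum>a''\<in>A. tauT (t - 1) s'' a'' s))"

text \<open>Linear relaxation of Q^d(T, S, Ob, A, p): delta^t_{a|ob} in [0,1] instead of {0,1}.\<close>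
definition Qd_relax ::
  "nat \<Rightarrow> 's set \<Rightarrow> 'ob set \<Rightarrow> 'a set \<Rightarrow> ('s \<Rightarrow> real) \<Rightarrow> ('s \<Rightarrow> 'ob \<Rightarrow> real)
   \<Rightarrow> ('s \<Rightarrow> 'a \<Rightarrow> 's \<Rightarrow> real)
   \<Rightarrow> ('s \<Rightarrow> real) \<Rightarrow> (nat \<Rightarrow> 's \<Rightarrow> 'ob \<Rightarrow> 'a \<Rightarrow> real) \<Rightarrow> (nat \<Rightarrow> 's \<Rightarrow> 'a \<Rightarrow> 's \<Rightarrow> real)
   \<Rightarrow> (nat \<Rightarrow> 'a \<Rightarrow> 'ob \<Rightarrow> real) \<Rightarrow> bool" where
  "Qd_relax T S Ob A p0 pe pt tau1 tauO tauT delta \<longleftrightarrow>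
     (\<forall>t\<in>{1..T}. \<forall>ob\<in>Ob. (\<forall>a\<in>A. 0 \<le> delta t a ob \<and> delta t a ob \<le> 1) \<and> (\<Sum>a\<in>A. delta t a ob) = 1)
   \<and> (\<forall>s\<in>S. 0 \<le> tau1 s)
   \<and> (\<forall>t\<in>{1..T}. \<forall>s\<in>S. \<forall>ob\<in>Ob. \<forall>a\<in>A. 0 \<le> tauO t s ob a)
   \<and> (\<forall>t\<in>{1..T}. \<forall>s\<in>S. \<forall>a\<in>A. \<forall>s'\<in>S. 0 \<le> tauT t s a s')
   \<and> (\<forall>s\<in>S. tau1 s = p0 s)
   \<and> (\<forall>t\<in>{1..T}. \<forall>s\<in>S. (\<Sum>ob\<in>Ob. \<Sum>a\<in>A. tauO t s ob a) = nu_of S A tau1 tauT t s)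
   \<and> (\<forall>t\<in>{1..T}. \<forall>s\<in>S. \<forall>a\<in>A. (\<Sum>sb\<in>S. tauT t s a sb) = (\<Sum>ob\<in>Ob. tauO t s ob a))
   \<and> (\<forall>t\<in>{1..T}. \<forall>s\<in>S. \<forall>a\<in>A. \<forall>s'\<in>S. tauT t s a s' = pt s a s' * (\<Sum>sb\<in>S. tauT t s a sb))
   \<and> (\<forall>t\<in>{1..T}. \<forall>s\<in>S. \<forall>ob\<in>Ob. \<forall>a\<in>A.
        tauO t s ob a \<le> pe s ob * nu_of S A tau1 tauT t s
      \<and> tauO t s ob a \<le> delta t a ob
      \<and> tauO t s ob a \<ge> pe s ob * nu_of S A tau1 tauT t s + delta t a ob - 1)"

definition IPd_relax_feasible ::
  "nat \<Rightarrow> nat \<Rightarrow> (nat \<Rightarrow> 's set) \<Rightarrow> (nat \<Rightarrow> 'ob set) \<Rightarrow> 'a set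
   \<Rightarrow> (nat \<Rightarrow> 's \<Rightarrow> real) \<Rightarrow> (nat \<Rightarrow> 's \<Rightarrow> 'ob \<Rightarrow> real) \<Rightarrow> (nat \<Rightarrow> 's \<Rightarrow> 'a \<Rightarrow> 's \<Rightarrow> real)
   \<Rightarrow> (nat \<Rightarrow> 's \<Rightarrow> real) \<Rightarrow> (nat \<Rightarrow> nat \<Rightarrow> 's \<Rightarrow> 'ob \<Rightarrow> 'a \<Rightarrow> real)
   \<Rightarrow> (nat \<Rightarrow> nat \<Rightarrow> 's \<Rightarrow> 'a \<Rightarrow> 's \<Rightarrow> real) \<Rightarrow> (nat \<Rightarrow> nat \<Rightarrow> 'a \<Rightarrow> 'ob \<Rightarrow> real) \<Rightarrow> bool" where
  "IPd_relax_feasible M T S Ob A p0 pe pt tau1 tauO tauT delta \<longleftrightarrow>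
     (\<forall>m\<in>{1..M}. Qd_relax T (S m) (Ob m) A (p0 m) (pe m) (pt m)
        (tau1 m) (\<lambda>t. tauO t m) (\<lambda>t. tauT t m) (\<lambda>t. delta t m))
   \<and> (\<forall>t\<in>{1..T}. \<forall>m\<in>{1..<M}. \<forall>a\<in>A.
        (\<Sum>s\<in>S m. \<Sum>ob\<in>Ob m. tauO t m s ob a) = (\<Sum>s\<in>S (m+1). \<Sum>ob\<in>Ob (m+1). tauO t (m+1) s ob a))"

definition IPd_obj ::
  "nat \<Rightarrow> nat \<Rightarrow> (nat \<Rightarrow> 's set) \<Rightarrow> 'a set \<Rightarrow> (nat \<Rightarrow> 's \<Rightarrow> 'a \<Rightarrow> 's \<Rightarrow> real)
   \<Rightarrow> (nat \<Rightarrow> nat \<Rightarrow> 's \<Rightarrow> 'a \<Rightarrow> 's \<Rightarrow> real) \<Rightarrow> real" where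
  "IPd_obj M T S A r tauT =
     (\<Sum>t\<in>{1..T}. \<Sum>m\<in>{1..M}. \<Sum>s\<in>S m. \<Sum>a\<in>A. \<Sum>s'\<in>S m. r m s a s' * tauT t m s a s')"

definition F_feasible ::
  "nat \<Rightarrow> nat \<Rightarrow> (nat \<Rightarrow> 's set) \<Rightarrow> 'a set
   \<Rightarrow> (nat \<Rightarrow> 's \<Rightarrow> real) \<Rightarrow> (nat \<Rightarrow> 's \<Rightarrow> 'a \<Rightarrow> 's \<Rightarrow> real)
   \<Rightarrow> (nat \<Rightarrow> 's \<Rightarrow> real) \<Rightarrow> (nat \<Rightarrow> nat \<Rightarrow> 's \<Rightarrow> 'a \<Rightarrow> 's \<Rightarrow> real) \<Rightarrow> (nat \<Rightarrow> 'a \<Rightarrow> real) \<Rightarrow> bool" where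
  "F_feasible M T S A p0 pt x1 x Aa \<longleftrightarrow>
     (\<forall>m\<in>{1..M}. \<forall>s\<in>S m. 0 \<le> x1 m s)
   \<and> (\<forall>t\<in>{1..T}. \<forall>m\<in>{1..M}. \<forall>s\<in>S m. \<forall>a\<in>A. \<forall>s'\<in>S m. 0 \<le> x t m s a s')
   \<and> (\<forall>t\<in>{1..T}. \<forall>a\<in>A. 0 \<le> Aa t a)
   \<and> (\<forall>m\<in>{1..M}. \<forall>s\<in>S m. x1 m s = (\<Sum>a'\<in>A. \<Sum>s'\<in>S m. x 1 m s a' s'))
   \<and> (\<forall>t\<in>{1..<T}. \<forall>m\<in>{1..M}. \<forall>s\<in>S m.
        (\<Sum>s'\<in>S m. \<Sum>a'\<in>A. x t m s' a' s) = (\<Sum>a'\<in>A. \<Sum>s'\<in>S m. x (t+1) m s a' s'))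
   \<and> (\<forall>m\<in>{1..M}. \<forall>s\<in>S m. x1 m s = p0 m s)
   \<and> (\<forall>t\<in>{1..T}. \<forall>m\<in>{1..M}. \<forall>s\<in>S m. \<forall>a\<in>A. \<forall>s'\<in>S m.
        x t m s a s' = pt m s a s' * (\<Sum>s''\<in>S m. x t m s a s''))
   \<and> (\<forall>t\<in>{1..T}. \<forall>m\<in>{1..M}. \<forall>a\<in>A. (\<Sum>s\<in>S m. \<Sum>s'\<in>S m. x t m s a s') = Aa t a)"

definition z_R where
  "z_R M T S Ob A p0 pe pt r = Sup (ereal ` {IPd_obj M T S A r tauT | tau1 tauO tauT delta.
       IPd_relax_feasible M T S Ob A p0 pe pt tau1 tauO tauT delta})"

definition z_F where
  "z_F M T S A p0 pt r = Sup (ereal ` {IPd_obj M T S A r x | x1 x Aa.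
       F_feasible M T S A p0 pt x1 x Aa})"

end

theory Submission imports Defs begin

lemma comp_F_to_Q:
 fixes S :: "'s set" and Ob :: "'ob set" and A :: "'a set" and x1 :: "'s \<Rightarrow> real"
   and x :: "nat \<Rightarrow> 's \<Rightarrow> 'a \<Rightarrow> 's \<Rightarrow> real"
 assumes fS: "finite S" and fO: "finite Ob" and fA: "finite A"
 and p0_sum: "(\<Sum>s\<in>S. p0 s) = 1"
 and pe_nn: "\<And>s ob. s\<in>S \<Longrightarrow> ob\<in>Ob \<Longrightarrow> 0 \<le> pe s ob"
 and pe_sum: "\<And>s. s\<in>S \<Longrightarrow> (\<Sum>ob\<in>Ob. pe s ob) = 1"
 and pt_sum: "\<And>s a. s\<in>S \<Longrightarrow> a\<in>A \<Longrightarrow> (\<Sum>s'\<in>S. pt s a s') = 1"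
 and x1nn: "\<forall>s\<in>S. 0 \<le> x1 s"
 and xnn: "\<forall>t\<in>{1..T}. \<forall>s\<in>S. \<forall>a\<in>A. \<forall>s'\<in>S. 0 \<le> x t s a s'"
 and x1f: "\<forall>s\<in>S. x1 s = (\<Sum>a'\<in>A. \<Sum>s'\<in>S. x 1 s a' s')"
 and flow: "\<forall>t\<in>{1..<T}. \<forall>s\<in>S. (\<Sum>s'\<in>S. \<Sum>a'\<in>A. x t s' a' s) = (\<Sum>a'\<in>A. \<Sum>s'\<in>S. x (t+1) s a' s')"
 and x1p: "\<forall>s\<in>S. x1 s = p0 s"
 and xpt: "\<forall>t\<in>{1..T}. \<forall>s\<in>S. \<forall>a\<in>A. \<forall>s'\<in>S. x t s a s' = pt s a s' * (\<Sum>s''\<in>S. x t s a s'')"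
 shows "Qd_relax T S Ob A p0 pe pt x1 (\<lambda>t s ob a. pe s ob * (\<Sum>s'\<in>S. x t s a s')) x
          (\<lambda>t a ob. \<Sum>s\<in>S. \<Sum>s'\<in>S. x t s a s')"
proof -
  define y where "y t s a = (\<Sum>s'\<in>S. x t s a s')" for t s a
  define w where "w t a = (\<Sum>s\<in>S. y t s a)" for t a
  have ynn: "0 \<le> y t s a" if "t \<in> {1..T}" "s \<in> S" "a \<in> A" for t s a
    unfolding y_def using xnn that by (auto intro: sum_nonneg)
  have wnn: "0 \<le> w t a" if "t \<in> {1..T}" "a \<in> A" for t a
    unfolding w_def using ynn that by (auto intro: sum_nonneg)
  have nu_eq: "nu_of S A x1 x t s = (\<Sum>a\<in>A. y t s a)" if "t \<in> {1..T}" "s \<in> S" for t s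
  proof (cases "t = 1")
    case True then show ?thesis using x1f that by (simp add: nu_of_def y_def)
  next
    case False
    then have "t - 1 \<in> {1..<T}" "t - 1 + 1 = t" using that by auto
    then show ?thesis using flow that False by (force simp add: nu_of_def y_def)
  qed
  have ysum: "(\<Sum>s'\<in>S. x t s a s') = y t s a" for t s a by (simp add: y_def)
  have yback: "(\<Sum>s\<in>S. x t s' a' s) = y t s' a'" if "t \<in> {1..T}" "s' \<in> S" "a' \<in> A" for t s' a'
  proof -
    have "(\<Sum>s\<in>S. x t s' a' s) = (\<Sum>s\<in>S. pt s' a' s * y t s' a')"
      using xpt that by (auto simp: y_def intro!: sum.cong)
    also have "\<dots> = y t s' a'" using pt_sum[OF that(2,3)] by (simp add: sum_distrib_right[symmetric])
    finally show ?thesis .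
  qed
  have mass: "(\<Sum>s\<in>S. \<Sum>a\<in>A. y t s a) = 1" if "1 \<le> t" "t \<le> T" for t
    using that
  proof (induction t rule: nat_induct_at_least)
    case base
    have "(\<Sum>s\<in>S. \<Sum>a\<in>A. y 1 s a) = (\<Sum>s\<in>S. x1 s)" using x1f by (auto simp: y_def intro!: sum.cong)
    also have "\<dots> = 1" using x1p p0_sum by simp
    finally show ?case .
  next
    case (Suc n)
    have n1: "n \<in> {1..<T}" "n \<in> {1..T}" using Suc by auto
    have "(\<Sum>s\<in>S. \<Sum>a\<in>A. y (Suc n) s a) = (\<Sum>s\<in>S. \<Sum>s'\<in>S. \<Sum>a'\<in>A. x n s' a' s)"
      using flow n1 by (auto simp: y_def intro!: sum.cong)
    also have "\<dots> = (\<Sum>s'\<in>S. \<Sum>s\<in>S. \<Sum>a'\<in>A. x n s' a' s)"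
      by (rule sum.swap)
    also have "\<dots> = (\<Sum>s'\<in>S. \<Sum>a'\<in>A. \<Sum>s\<in>S. x n s' a' s)"
      by (rule sum.cong[OF refl], rule sum.swap)
    also have "\<dots> = (\<Sum>s'\<in>S. \<Sum>a'\<in>A. y n s' a')"
      using yback n1 by (auto intro!: sum.cong)
    also have "\<dots> = 1" using Suc by simp
    finally show ?case .
  qed
  have wsum: "(\<Sum>a\<in>A. w t a) = 1" if "t \<in> {1..T}" for t
    using mass[of t] that unfolding w_def by (metis sum.swap atLeastAtMost_iff)
  have pe_le: "pe s ob \<le> 1" if "s \<in> S" "ob \<in> Ob" for s ob
    using pe_sum[OF that(1)] member_le_sum[of ob Ob "pe s"] pe_nn that fO by auto
  have y_le_w: "y t s a \<le> w t a" if "t \<in> {1..T}" "s \<in> S" "a \<in> A" for t s a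
    unfolding w_def using member_le_sum[of s S "\<lambda>s. y t s a"] ynn that fS by auto
  have y_le_nu: "y t s a \<le> (\<Sum>a\<in>A. y t s a)" if "t \<in> {1..T}" "s \<in> S" "a \<in> A" for t s a
    using member_le_sum[of a A "y t s"] ynn that fA by auto
  have w_le1: "w t a \<le> 1" if "t \<in> {1..T}" "a \<in> A" for t a
    using member_le_sum[of a A "w t"] wnn that fA wsum by auto
  have gap: "(\<Sum>a'\<in>A. y t s a') - y t s a \<le> 1 - w t a" if "t \<in> {1..T}" "s \<in> S" "a \<in> A" for t s a
  proof -
    have "(\<Sum>a'\<in>A. y t s a') - y t s a = (\<Sum>a'\<in>A-{a}. y t s a')"
      using that fA by (simp add: sum_diff1)
    also have "\<dots> \<le> (\<Sum>a'\<in>A-{a}. w t a')" using y_le_w that by (auto intro!: sum_mono)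
    also have "\<dots> = 1 - w t a" using that fA wsum by (simp add: sum_diff1)
    finally show ?thesis .
  qed
  show ?thesis
    unfolding Qd_relax_def
  proof (intro conjI ballI)
    fix t ob a assume "t \<in> {1..T}" "ob \<in> Ob" "a \<in> A"
    then show "0 \<le> (\<Sum>s\<in>S. \<Sum>s'\<in>S. x t s a s')" "(\<Sum>s\<in>S. \<Sum>s'\<in>S. x t s a s') \<le> 1"
      using wnn w_le1 by (auto simp: w_def y_def)
  next
    fix t ob assume "t \<in> {1..T}" "ob \<in> Ob"
    then show "(\<Sum>a\<in>A. \<Sum>s\<in>S. \<Sum>s'\<in>S. x t s a s') = 1" using wsum by (simp add: w_def y_def)
  next
    fix s assume "s \<in> S" then show "0 \<le> x1 s" "x1 s = p0 s" using x1nn x1p by auto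
  next
    fix t s ob a assume "t \<in> {1..T}" "s \<in> S" "ob \<in> Ob" "a \<in> A"
    then show "0 \<le> pe s ob * (\<Sum>s'\<in>S. x t s a s')" using pe_nn ynn by (simp add: y_def)
  next
    fix t s a s' assume "t \<in> {1..T}" "s \<in> S" "a \<in> A" "s' \<in> S"
    then show "0 \<le> x t s a s'" "x t s a s' = pt s a s' * (\<Sum>sb\<in>S. x t s a sb)"
      using xnn xpt by blast+
  next
    fix t s assume ts: "t \<in> {1..T}" "s \<in> S"
    have "(\<Sum>ob\<in>Ob. \<Sum>a\<in>A. pe s ob * (\<Sum>s'\<in>S. x t s a s')) = (\<Sum>a\<in>A. (\<Sum>ob\<in>Ob. pe s ob) * y t s a)"
      by (subst sum.swap) (simp add: sum_distrib_right y_def)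
    also have "\<dots> = (\<Sum>a\<in>A. y t s a)" using pe_sum ts by simp
    finally show "(\<Sum>ob\<in>Ob. \<Sum>a\<in>A. pe s ob * (\<Sum>s'\<in>S. x t s a s')) = nu_of S A x1 x t s"
      using nu_eq ts by simp
  next
    fix t s a assume ts: "t \<in> {1..T}" "s \<in> S" "a \<in> A"
    show "(\<Sum>sb\<in>S. x t s a sb) = (\<Sum>ob\<in>Ob. pe s ob * (\<Sum>s'\<in>S. x t s a s'))"
      using pe_sum ts by (simp add: sum_distrib_right[symmetric])
  next
    fix t s ob a assume ts: "t \<in> {1..T}" "s \<in> S" "ob \<in> Ob" "a \<in> A"
    have pe0: "0 \<le> pe s ob" "pe s ob \<le> 1" using pe_nn pe_le ts by auto
    have y0: "0 \<le> y t s a" using ynn ts by auto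
    have nu: "nu_of S A x1 x t s = (\<Sum>a\<in>A. y t s a)" using nu_eq ts by auto
    have g: "(\<Sum>a'\<in>A. y t s a') - y t s a \<le> 1 - w t a" using gap ts by auto
    have yn: "y t s a \<le> (\<Sum>a\<in>A. y t s a)" using y_le_nu ts by auto
    have yw: "y t s a \<le> w t a" using y_le_w ts by auto
    have "pe s ob * ((\<Sum>a'\<in>A. y t s a') - y t s a) \<le> (\<Sum>a'\<in>A. y t s a') - y t s a"
      using pe0 yn by (simp add: mult_left_le_one_le)
    then have h: "pe s ob * (\<Sum>s'\<in>S. x t s a s') \<le> pe s ob * nu_of S A x1 x t s \<and>
           pe s ob * (\<Sum>s'\<in>S. x t s a s') \<le> (\<Sum>s\<in>S. \<Sum>s'\<in>S. x t s a s') \<and>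
           pe s ob * nu_of S A x1 x t s + (\<Sum>s\<in>S. \<Sum>s'\<in>S. x t s a s') - 1 \<le> pe s ob * (\<Sum>s'\<in>S. x t s a s')"
      using pe0 y0 yn yw g nu unfolding ysum w_def[symmetric]
      by (auto simp: w_def intro: mult_left_mono mult_left_le_one_le order_trans[of _ "y t s a"] simp: algebra_simps)
    from h show "pe s ob * (\<Sum>s'\<in>S. x t s a s') \<le> pe s ob * nu_of S A x1 x t s" by blast
    from h show "pe s ob * (\<Sum>s'\<in>S. x t s a s') \<le> (\<Sum>s\<in>S. \<Sum>s'\<in>S. x t s a s')" by blast
    from h show "pe s ob * nu_of S A x1 x t s + (\<Sum>s\<in>S. \<Sum>s'\<in>S. x t s a s') - 1 \<le> pe s ob * (\<Sum>s'\<in>S. x t s a s')" by blast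
  qed
qed

lemma comp_Q_to_F:
  assumes Q: "Qd_relax T S Ob A p0 pe pt tau1 tauO tauT delta"
  shows "(\<forall>s\<in>S. 0 \<le> tau1 s) \<and> (\<forall>t\<in>{1..T}. \<forall>s\<in>S. \<forall>a\<in>A. \<forall>s'\<in>S. 0 \<le> tauT t s a s')
   \<and> (\<forall>s\<in>S. tau1 s = p0 s)
   \<and> (\<forall>t\<in>{1..T}. \<forall>s\<in>S. \<forall>a\<in>A. \<forall>s'\<in>S. tauT t s a s' = pt s a s' * (\<Sum>sb\<in>S. tauT t s a sb))
   \<and> (1 \<le> T \<longrightarrow> (\<forall>s\<in>S. tau1 s = (\<Sum>a'\<in>A. \<Sum>s'\<in>S. tauT 1 s a' s')))
   \<and> (\<forall>t\<in>{1..<T}. \<forall>s\<in>S. (\<Sum>s'\<in>S. \<Sum>a'\<in>A. tauT t s' a' s) = (\<Sum>a'\<in>A. \<Sum>s'\<in>S. tauT (t+1) s a' s'))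
   \<and> (\<forall>t\<in>{1..T}. \<forall>a\<in>A. (\<Sum>s\<in>S. \<Sum>s'\<in>S. tauT t s a s') = (\<Sum>s\<in>S. \<Sum>ob\<in>Ob. tauO t s ob a))"
proof -
  have ii: "\<forall>t\<in>{1..T}. \<forall>s\<in>S. (\<Sum>ob\<in>Ob. \<Sum>a\<in>A. tauO t s ob a) = nu_of S A tau1 tauT t s"
   and iii: "\<forall>t\<in>{1..T}. \<forall>s\<in>S. \<forall>a\<in>A. (\<Sum>sb\<in>S. tauT t s a sb) = (\<Sum>ob\<in>Ob. tauO t s ob a)"
    using Q unfolding Qd_relax_def by blast+
  have key: "(\<Sum>a'\<in>A. \<Sum>s'\<in>S. tauT t s a' s') = nu_of S A tau1 tauT t s" if "t \<in> {1..T}" "s \<in> S" for t s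
  proof -
    have "(\<Sum>a'\<in>A. \<Sum>s'\<in>S. tauT t s a' s') = (\<Sum>a'\<in>A. \<Sum>ob\<in>Ob. tauO t s ob a')"
      using iii that by (auto intro!: sum.cong)
    also have "\<dots> = (\<Sum>ob\<in>Ob. \<Sum>a\<in>A. tauO t s ob a)" by (rule sum.swap)
    finally show ?thesis using ii that by simp
  qed
  have p1: "1 \<le> T \<longrightarrow> (\<forall>s\<in>S. tau1 s = (\<Sum>a'\<in>A. \<Sum>s'\<in>S. tauT 1 s a' s'))"
    using key[of 1] by (simp add: nu_of_def)
  have p2: "\<forall>t\<in>{1..<T}. \<forall>s\<in>S. (\<Sum>s'\<in>S. \<Sum>a'\<in>A. tauT t s' a' s) = (\<Sum>a'\<in>A. \<Sum>s'\<in>S. tauT (t+1) s a' s')"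
  proof (intro ballI)
    fix t s assume "t \<in> {1..<T}" "s \<in> S"
    then show "(\<Sum>s'\<in>S. \<Sum>a'\<in>A. tauT t s' a' s) = (\<Sum>a'\<in>A. \<Sum>s'\<in>S. tauT (t+1) s a' s')"
      using key[of "t+1" s] by (simp add: nu_of_def)
  qed
  have p3: "\<forall>t\<in>{1..T}. \<forall>a\<in>A. (\<Sum>s\<in>S. \<Sum>s'\<in>S. tauT t s a s') = (\<Sum>s\<in>S. \<Sum>ob\<in>Ob. tauO t s ob a)"
    using iii by (auto intro!: sum.cong)
  have q: "(\<forall>s\<in>S. 0 \<le> tau1 s) \<and> (\<forall>t\<in>{1..T}. \<forall>s\<in>S. \<forall>a\<in>A. \<forall>s'\<in>S. 0 \<le> tauT t s a s')
   \<and> (\<forall>s\<in>S. tau1 s = p0 s)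
   \<and> (\<forall>t\<in>{1..T}. \<forall>s\<in>S. \<forall>a\<in>A. \<forall>s'\<in>S. tauT t s a s' = pt s a s' * (\<Sum>sb\<in>S. tauT t s a sb))"
    using Q unfolding Qd_relax_def by (elim conjE) (intro conjI; assumption)
  show ?thesis using p1 p2 p3 q by (elim conjE) (intro conjI; assumption)
qed

theorem mainTheorem10:
  fixes M T :: nat
    and S :: "nat \<Rightarrow> 's set" and Ob :: "nat \<Rightarrow> 'ob set" and A :: "'a set"
    and p0 :: "nat \<Rightarrow> 's \<Rightarrow> real" and pe :: "nat \<Rightarrow> 's \<Rightarrow> 'ob \<Rightarrow> real"
    and pt :: "nat \<Rightarrow> 's \<Rightarrow> 'a \<Rightarrow> 's \<Rightarrow> real" and r :: "nat \<Rightarrow> 's \<Rightarrow> 'a \<Rightarrow> 's \<Rightarrow> real"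
  assumes finS: "\<And>m. m \<in> {1..M} \<Longrightarrow> finite (S m)"
    and finO: "\<And>m. m \<in> {1..M} \<Longrightarrow> finite (Ob m)"
    and finA: "finite A" and neA: "A \<noteq> {}"
    and p0_nn: "\<And>m s. m \<in> {1..M} \<Longrightarrow> s \<in> S m \<Longrightarrow> 0 \<le> p0 m s"
    and p0_sum: "\<And>m. m \<in> {1..M} \<Longrightarrow> (\<Sum>s\<in>S m. p0 m s) = 1"
    and pe_nn: "\<And>m s ob. m \<in> {1..M} \<Longrightarrow> s \<in> S m \<Longrightarrow> ob \<in> Ob m \<Longrightarrow> 0 \<le> pe m s ob"
    and pe_sum: "\<And>m s. m \<in> {1..M} \<Longrightarrow> s \<in> S m \<Longrightarrow> (\<Sum>ob\<in>Ob m. pe m s ob) = 1"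
    and pt_nn: "\<And>m s a s'. m \<in> {1..M} \<Longrightarrow> s \<in> S m \<Longrightarrow> a \<in> A \<Longrightarrow> s' \<in> S m \<Longrightarrow> 0 \<le> pt m s a s'"
    and pt_sum: "\<And>m s a. m \<in> {1..M} \<Longrightarrow> s \<in> S m \<Longrightarrow> a \<in> A \<Longrightarrow> (\<Sum>s'\<in>S m. pt m s a s') = 1"
  shows "(\<forall>v::real.
            (\<exists>tau1 tauO tauT delta. IPd_relax_feasible M T S Ob A p0 pe pt tau1 tauO tauT delta
                 \<and> IPd_obj M T S A r tauT = v)
          \<longleftrightarrow> (\<exists>x1 x Aa. F_feasible M T S A p0 pt x1 x Aa \<and> IPd_obj M T S A r x = v))
       \<and> z_F M T S A p0 pt r = z_R M T S Ob A p0 pe pt r"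
proof -
  have eqv: "\<forall>v::real.
            (\<exists>tau1 tauO tauT delta. IPd_relax_feasible M T S Ob A p0 pe pt tau1 tauO tauT delta
                 \<and> IPd_obj M T S A r tauT = v)
          \<longleftrightarrow> (\<exists>x1 x Aa. F_feasible M T S A p0 pt x1 x Aa \<and> IPd_obj M T S A r x = v)"
  proof (intro allI iffI)
    fix v assume "\<exists>tau1 tauO tauT delta. IPd_relax_feasible M T S Ob A p0 pe pt tau1 tauO tauT delta
                 \<and> IPd_obj M T S A r tauT = v"
    then obtain tau1 tauO tauT delta where feas: "IPd_relax_feasible M T S Ob A p0 pe pt tau1 tauO tauT delta"
      and ov: "IPd_obj M T S A r tauT = v" by blast
    have Qm: "Qd_relax T (S m) (Ob m) A (p0 m) (pe m) (pt m)
        (tau1 m) (\<lambda>t. tauO t m) (\<lambda>t. tauT t m) (\<lambda>t. delta t m)" if "m \<in> {1..M}" for m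
      using feas that unfolding IPd_relax_feasible_def by blast
    have link: "\<forall>t\<in>{1..T}. \<forall>m\<in>{1..<M}. \<forall>a\<in>A.
        (\<Sum>s\<in>S m. \<Sum>ob\<in>Ob m. tauO t m s ob a) = (\<Sum>s\<in>S (m+1). \<Sum>ob\<in>Ob (m+1). tauO t (m+1) s ob a)"
      using feas unfolding IPd_relax_feasible_def by blast
    note C = comp_Q_to_F[OF Qm]
    have C1: "\<forall>s\<in>S m. 0 \<le> tau1 m s" "\<forall>s\<in>S m. tau1 m s = p0 m s" if "m \<in> {1..M}" for m
      using C[OF that] by blast+
    have C2: "\<forall>t\<in>{1..T}. \<forall>s\<in>S m. \<forall>a\<in>A. \<forall>s'\<in>S m. 0 \<le> tauT t m s a s'"
      "\<forall>t\<in>{1..T}. \<forall>s\<in>S m. \<forall>a\<in>A. \<forall>s'\<in>S m. tauT t m s a s' = pt m s a s' * (\<Sum>sb\<in>S m. tauT t m s a sb)"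
      if "m \<in> {1..M}" for m
      using C[OF that] by blast+
    have C5: "1 \<le> T \<longrightarrow> (\<forall>s\<in>S m. tau1 m s = (\<Sum>a'\<in>A. \<Sum>s'\<in>S m. tauT 1 m s a' s'))"
      if "m \<in> {1..M}" for m
      using C[OF that] by blast
    have C6: "\<forall>t\<in>{1..<T}. \<forall>s\<in>S m. (\<Sum>s'\<in>S m. \<Sum>a'\<in>A. tauT t m s' a' s) = (\<Sum>a'\<in>A. \<Sum>s'\<in>S m. tauT (t+1) m s a' s')"
      if "m \<in> {1..M}" for m
      using C[OF that] by blast
    have C7: "\<forall>t\<in>{1..T}. \<forall>a\<in>A. (\<Sum>s\<in>S m. \<Sum>s'\<in>S m. tauT t m s a s') = (\<Sum>s\<in>S m. \<Sum>ob\<in>Ob m. tauO t m s ob a)"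
      if "m \<in> {1..M}" for m
      using C[OF that] by blast
    have tauOnn: "0 \<le> tauO t m s ob a" if "m \<in> {1..M}" "t \<in> {1..T}" "s \<in> S m" "ob \<in> Ob m" "a \<in> A" for m t s ob a
    proof -
      have "\<forall>t\<in>{1..T}. \<forall>s\<in>S m. \<forall>ob\<in>Ob m. \<forall>a\<in>A. 0 \<le> tauO t m s ob a"
        using Qm[OF that(1)] unfolding Qd_relax_def by (elim conjE)
      then show ?thesis using that by blast
    qed
    have linkall: "(\<Sum>s\<in>S m. \<Sum>ob\<in>Ob m. tauO t m s ob a) = (\<Sum>s\<in>S 1. \<Sum>ob\<in>Ob 1. tauO t 1 s ob a)"
      if "t \<in> {1..T}" "a \<in> A" "1 \<le> m" "m \<le> M" for t a m
      using that(3,4)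
    proof (induction m rule: nat_induct_at_least)
      case base then show ?case by simp
    next
      case (Suc n)
      then have "n \<in> {1..<M}" by auto
      then show ?case using link that Suc by auto
    qed
    define fb where "fb m s a s' = p0 m s * pt m s a s' / real (card A)" for m s a s'
    define x where "x t m s a s' = (if t \<in> {1..T} then tauT t m s a s' else fb m s a s')" for t m s a s'
    define Aa where "Aa t a = (if M = 0 then 0 else (\<Sum>s\<in>S 1. \<Sum>ob\<in>Ob 1. tauO t 1 s ob a))" for t a
    have cardA: "real (card A) > 0" using finA neA by (simp add: card_gt_0_iff)
    have fbsum: "(\<Sum>a\<in>A. \<Sum>s'\<in>S m. fb m s a s') = p0 m s" if "m \<in> {1..M}" "s \<in> S m" for m s
    proof -
      have "(\<Sum>a\<in>A. \<Sum>s'\<in>S m. fb m s a s') = (\<Sum>a\<in>A. p0 m s / real (card A) * (\<Sum>s'\<in>S m. pt m s a s'))"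
        by (simp add: fb_def sum_distrib_left)
      also have "\<dots> = (\<Sum>a\<in>A. p0 m s / real (card A))" using pt_sum that by simp
      also have "\<dots> = p0 m s" using cardA by simp
      finally show ?thesis .
    qed
    have obj: "IPd_obj M T S A r x = IPd_obj M T S A r tauT"
      unfolding IPd_obj_def x_def by (intro sum.cong) auto
    have "F_feasible M T S A p0 pt tau1 x Aa"
      unfolding F_feasible_def
    proof (intro conjI ballI)
      fix m s assume "m \<in> {1..M}" "s \<in> S m"
      then show "0 \<le> tau1 m s" "tau1 m s = p0 m s" using C1 by blast+
    next
      fix t m s a s' assume h: "t \<in> {1..T}" "m \<in> {1..M}" "s \<in> S m" "a \<in> A" "s' \<in> S m"
      have e: "x t m = tauT t m" using h(1) by (simp add: x_def fun_eq_iff)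
      show "0 \<le> x t m s a s'" "x t m s a s' = pt m s a s' * (\<Sum>s''\<in>S m. x t m s a s'')"
        unfolding e using C2[OF h(2)] h by blast+
    next
      fix t a assume ta: "t \<in> {1..T}" "a \<in> A"
      show "0 \<le> Aa t a"
      proof (cases "M = 0")
        case False
        then have "1 \<in> {1..M}" by auto
        then show ?thesis using tauOnn ta False unfolding Aa_def by (auto intro!: sum_nonneg)
      qed (simp add: Aa_def)
    next
      fix m s assume ms: "m \<in> {1..M}" "s \<in> S m"
      show "tau1 m s = (\<Sum>a'\<in>A. \<Sum>s'\<in>S m. x 1 m s a' s')"
      proof (cases "1 \<le> T")
        case True then show ?thesis using C5[OF ms(1)] ms by (simp add: x_def)
      next
        case False then show ?thesis using C1[OF ms(1)] ms fbsum by (simp add: x_def)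
      qed
    next
      fix t m s assume tms: "t \<in> {1..<T}" "m \<in> {1..M}" "s \<in> S m"
      then have "t \<in> {1..T}" "t + 1 \<in> {1..T}" by auto
      then show "(\<Sum>s'\<in>S m. \<Sum>a'\<in>A. x t m s' a' s) = (\<Sum>a'\<in>A. \<Sum>s'\<in>S m. x (t + 1) m s a' s')"
        using C6[OF tms(2)] tms by (simp add: x_def)
    next
      fix t m a assume tma: "t \<in> {1..T}" "m \<in> {1..M}" "a \<in> A"
      then have "(\<Sum>s\<in>S m. \<Sum>s'\<in>S m. x t m s a s') = (\<Sum>s\<in>S m. \<Sum>ob\<in>Ob m. tauO t m s ob a)"
        using C7[OF tma(2)] tma by (simp add: x_def)
      also have "\<dots> = Aa t a" using linkall[of t a m] tma by (auto simp: Aa_def)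
      finally show "(\<Sum>s\<in>S m. \<Sum>s'\<in>S m. x t m s a s') = Aa t a" .
    qed
    then show "\<exists>x1 x Aa. F_feasible M T S A p0 pt x1 x Aa \<and> IPd_obj M T S A r x = v"
      using obj ov by blast
  next
    fix v assume "\<exists>x1 x Aa. F_feasible M T S A p0 pt x1 x Aa \<and> IPd_obj M T S A r x = v"
    then obtain x1 x Aa where F: "F_feasible M T S A p0 pt x1 x Aa" and ov: "IPd_obj M T S A r x = v"
      by blast
    note F' = F[unfolded F_feasible_def]
    note F1 = F'[THEN conjunct1] and F2 = F'[THEN conjunct2, THEN conjunct1]
      and F4 = F'[THEN conjunct2, THEN conjunct2, THEN conjunct2, THEN conjunct1]
      and F5 = F'[THEN conjunct2, THEN conjunct2, THEN conjunct2, THEN conjunct2, THEN conjunct1]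
      and F6 = F'[THEN conjunct2, THEN conjunct2, THEN conjunct2, THEN conjunct2, THEN conjunct2, THEN conjunct1]
      and F7 = F'[THEN conjunct2, THEN conjunct2, THEN conjunct2, THEN conjunct2, THEN conjunct2, THEN conjunct2, THEN conjunct1]
      and F8 = F'[THEN conjunct2, THEN conjunct2, THEN conjunct2, THEN conjunct2, THEN conjunct2, THEN conjunct2, THEN conjunct2]
    define tauO where "tauO t m s ob a = pe m s ob * (\<Sum>s'\<in>S m. x t m s a s')" for t m s ob a
    define delta where "delta t m a (ob::'ob) = (\<Sum>s\<in>S m. \<Sum>s'\<in>S m. x t m s a s')" for t m a ob
    have Qm: "Qd_relax T (S m) (Ob m) A (p0 m) (pe m) (pt m)
        (x1 m) (\<lambda>t. tauO t m) (\<lambda>t. x t m) (\<lambda>t. delta t m)" if m: "m \<in> {1..M}" for m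
      unfolding tauO_def delta_def
      apply (rule comp_F_to_Q)
      apply (rule finS[OF m])
      apply (rule finO[OF m])
      apply (rule finA)
      apply (rule p0_sum[OF m])
      apply (erule (1) pe_nn[OF m])
      apply (erule pe_sum[OF m])
      apply (erule (1) pt_sum[OF m])
      subgoal using F1 m by blast
      subgoal using F2 m by blast
      subgoal using F4 m by blast
      subgoal using F5 m by blast
      subgoal using F6 m by blast
      subgoal using F7 m by blast
      done
    have link: "(\<Sum>s\<in>S m. \<Sum>ob\<in>Ob m. tauO t m s ob a) = Aa t a"
      if "t \<in> {1..T}" "m \<in> {1..M}" "a \<in> A" for t m a
    proof -
      have "(\<Sum>s\<in>S m. \<Sum>ob\<in>Ob m. tauO t m s ob a) = (\<Sum>s\<in>S m. \<Sum>s'\<in>S m. x t m s a s')"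
        using pe_sum that by (auto simp: tauO_def sum_distrib_right[symmetric] intro!: sum.cong)
      then show ?thesis using F8 that by auto
    qed
    have "IPd_relax_feasible M T S Ob A p0 pe pt x1 tauO x delta"
      unfolding IPd_relax_feasible_def
    proof (intro conjI ballI)
      fix m assume "m \<in> {1..M}" then show "Qd_relax T (S m) (Ob m) A (p0 m) (pe m) (pt m)
        (x1 m) (\<lambda>t. tauO t m) (\<lambda>t. x t m) (\<lambda>t. delta t m)" by (rule Qm)
    next
      fix t m a assume "t \<in> {1..T}" "m \<in> {1..<M}" "a \<in> A"
      then show "(\<Sum>s\<in>S m. \<Sum>ob\<in>Ob m. tauO t m s ob a) = (\<Sum>s\<in>S (m+1). \<Sum>ob\<in>Ob (m+1). tauO t (m+1) s ob a)"
        using link[of t m a] link[of t "m+1" a] by auto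
    qed
    then show "\<exists>tau1 tauO tauT delta. IPd_relax_feasible M T S Ob A p0 pe pt tau1 tauO tauT delta
                 \<and> IPd_obj M T S A r tauT = v" using ov by blast
  qed
  have sets: "{IPd_obj M T S A r tauT | tau1 tauO tauT delta.
       IPd_relax_feasible M T S Ob A p0 pe pt tau1 tauO tauT delta}
     = {IPd_obj M T S A r x | x1 x Aa. F_feasible M T S A p0 pt x1 x Aa}"
  proof (intro set_eqI iffI)
    fix u assume "u \<in> {IPd_obj M T S A r tauT | tau1 tauO tauT delta.
       IPd_relax_feasible M T S Ob A p0 pe pt tau1 tauO tauT delta}"
    then have "\<exists>tau1 tauO tauT delta. IPd_relax_feasible M T S Ob A p0 pe pt tau1 tauO tauT delta
                 \<and> IPd_obj M T S A r tauT = u" by blast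
    then have "\<exists>x1 x Aa. F_feasible M T S A p0 pt x1 x Aa \<and> IPd_obj M T S A r x = u" using eqv by blast
    then show "u \<in> {IPd_obj M T S A r x | x1 x Aa. F_feasible M T S A p0 pt x1 x Aa}" by blast
  next
    fix u assume "u \<in> {IPd_obj M T S A r x | x1 x Aa. F_feasible M T S A p0 pt x1 x Aa}"
    then have "\<exists>x1 x Aa. F_feasible M T S A p0 pt x1 x Aa \<and> IPd_obj M T S A r x = u" by blast
    then have "\<exists>tau1 tauO tauT delta. IPd_relax_feasible M T S Ob A p0 pe pt tau1 tauO tauT delta
                 \<and> IPd_obj M T S A r tauT = u" using eqv by blast
    then show "u \<in> {IPd_obj M T S A r tauT | tau1 tauO tauT delta.
       IPd_relax_feasible M T S Ob A p0 pe pt tau1 tauO tauT delta}" by blast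
  qed
  show ?thesis using eqv sets unfolding z_F_def z_R_def by simp
qed

end
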